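(* Assume (A1) with $\Omega\supseteq B(x^*,\delta)$, (A2), (A3), and (A4) with exponent $r\in(0,1]$. Let $\{x_k\}$ be generated by LMMSS with $\alpha_k=1$ and $\lambda_k=\|J_k^TF_k\|^r$ for all $k$. Then there exists $\varepsilon>0$ such that, if $x_0\in B(x^*,\varepsilon)$, the sequence $\{\operatorname{dist}(x_k,X^* )\}$ converges to zero superlinearly and $\{x_k\}$ converges to a point of $X^*\cap B(x^*,\delta/2)$.
   Context: Let $F:\mathbb{R}^n\to\mathbb{R}^m$ be twice continuously differentiable with $m\ge n$, $J(x)$ its Jacobian, $\phi(x)=\tfrac12\|F(x)\|^2$, $\nabla\phi(x)=J(x)^TF(x)$. Norms are Euclidean/spectral. $X^*=\{x: J(x)^TF(x)=0\}\neq\emptyset$; $\operatorname{dist}(x,X^* )=\inf_{z\in X^*}\|x-z\|$. Fix $x^*\in X^*$; $B(x^*,\delta)$ is the closed ball. $L\in\mathbb{R}^{p\times n}$ has rank $p\le n$. LMMSS iteration: given $x_k$ and $\lambda_k>0$, with $F_k=F(x_k)$, $J_k=J(x_k)$, let $d_k$ solve $(J_k^TJ_k+\lambda_kL^TL)d_k=-J_k^TF_k$ and $x_{k+1}=x_k+\alpha_kd_k$. (A1) there are $\Omega$ and $\gamma>0$ with $\|J(x)v\|^2+\|Lv\|^2\ge\gamma\|v\|^2$ for $x\in\Omega$, all $v$. (A2) $\delta\in(0,1)$, $L_0>0$ with $\|J(x)-J(y)\|\le L_0\|x-y\|$ on $B(x^*,\delta)$. (A3) $\omega>0$ with $\omega\operatorname{dist}(x,X^*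 )\le\|J(x)^TF(x)\|$ on $B(x^*,\delta)$. (A4) $r\in(0,1]$, $C\ge0$ with $\|(J(x)-J(z))^TF(z)\|\le C\|x-z\|^{1+r}$ for $x\in B(x^*,\delta)$, $z\in X^*\cap B(x^*,\delta)$. *)

theory Defs
  imports "HOL-Analysis.Analysis"
begin

definition spec_norm :: "real^'n^'m \<Rightarrow> real" where
  "spec_norm A = onorm (\<lambda>v. A *v v)"

definition stat_set :: "(real^'n \<Rightarrow> real^'m) \<Rightarrow> (real^'n \<Rightarrow> real^'n^'m) \<Rightarrow> (real^'n) set" where
  "stat_set F J = {x. transpose (J x) *v F x = 0}"

end

theory Submission
  imports Defs
begin



lemma mv_bound: "norm (A *v v) \<le> spec_norm A * norm (v::real^'n)"
  for A :: "real^'n^'m"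
  unfolding spec_norm_def by (rule onorm) simp

lemma spec_norm_nonneg: "0 \<le> spec_norm (A::real^'n^'m)"
  unfolding spec_norm_def by (rule onorm_pos_le) simp

lemma adj: "inner (transpose A *v v) u = inner v (A *v u)"
  for A :: "real^'n^'m"
  by (simp add: dot_lmul_matrix)

lemma tmv_bound: "norm (transpose A *v v) \<le> spec_norm A * norm v"
  for A :: "real^'n^'m"
proof -
  let ?w = "transpose A *v v"
  have "norm ?w ^ 2 = inner v (A *v ?w)"
    by (simp add: power2_norm_eq_inner dot_lmul_matrix)
  also have "\<dots> \<le> norm v * norm (A *v ?w)" by (rule norm_cauchy_schwarz)
  also have "\<dots> \<le> norm v * (spec_norm A * norm ?w)"
    by (rule mult_left_mono[OF mv_bound]) simp
  finally have h: "norm ?w * norm ?w \<le> (spec_norm A * norm v) * norm ?w"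
    by (simp add: power2_eq_square algebra_simps)
  show ?thesis
  proof (cases "norm ?w = 0")
    case True then show ?thesis using spec_norm_nonneg[of A] by simp
  next
    case False then show ?thesis using h by (simp add: mult_le_cancel_right)
  qed
qed

lemma g_cont:
  fixes F :: "real^'n \<Rightarrow> real^'m" and J :: "real^'n \<Rightarrow> real^'n^'m"
  assumes "continuous_on UNIV F" "continuous_on UNIV J"
  shows "continuous_on UNIV (\<lambda>x. transpose (J x) *v F x)"
proof -
  have e: "(\<lambda>x. transpose (J x) *v F x) = (\<lambda>x. \<chi> i. \<Sum>j\<in>UNIV. J x $ j $ i * F x $ j)"
    by (auto simp: vec_eq_iff matrix_vector_mult_def transpose_def)
  show ?thesis unfolding e
    by (intro continuous_intros assms)
qed

lemma stat_closed:
  fixes F :: "real^'n \<Rightarrow> real^'m" and J :: "real^'n \<Rightarrow> real^'n^'m"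
  assumes "continuous_on UNIV F" "continuous_on UNIV J"
  shows "closed (stat_set F J)"
proof -
  have "closed {x\<in>UNIV. transpose (J x) *v F x = 0}"
    by (rule continuous_closed_preimage_constant[OF g_cont[OF assms]]) simp
  then show ?thesis unfolding stat_set_def by simp
qed

lemma mvt:
  fixes F :: "real^'n \<Rightarrow> real^'m" and J :: "real^'n \<Rightarrow> real^'n^'m"
  assumes F_deriv: "\<And>x. (F has_derivative (\<lambda>h. J x *v h)) (at x)"
    and Lip: "\<And>x y. x \<in> S \<Longrightarrow> y \<in> S \<Longrightarrow> spec_norm (J x - J y) \<le> L0 * norm (x - y)"
    and S: "convex S" "x \<in> S" "z \<in> S" and L0: "L0 \<ge> 0"
  shows "norm (F x - F z - J z *v (x - z)) \<le> L0 * norm (x - z) ^ 2"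
proof -
  let ?T = "closed_segment z x"
  have sub: "?T \<subseteq> S" using S closed_segment_subset by blast
  have "norm ((\<lambda>w. F w - J z *v w) x - (\<lambda>w. F w - J z *v w) z) \<le> (L0 * norm (x - z)) * norm (x - z)"
  proof (rule differentiable_bound[where f' = "\<lambda>w h. J w *v h - J z *v h"])
    show "convex ?T" by simp
    show "((\<lambda>w. F w - J z *v w) has_derivative (\<lambda>h. J w *v h - J z *v h)) (at w within ?T)" for w
      by (rule has_derivative_at_withinI, rule has_derivative_diff[OF F_deriv bounded_linear_imp_has_derivative]) simp
    show "onorm (\<lambda>h. J w *v h - J z *v h) \<le> L0 * norm (x - z)" if w: "w \<in> ?T" for w
    proof -
      have "(\<lambda>h. J w *v h - J z *v h) = (\<lambda>h. (J w - J z) *v h)" by (simp add: algebra_simps)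
      then have "onorm (\<lambda>h. J w *v h - J z *v h) = spec_norm (J w - J z)" by (simp add: spec_norm_def)
      also have "\<dots> \<le> L0 * norm (w - z)" using sub w S(3) by (intro Lip) auto
      also have "\<dots> \<le> L0 * norm (x - z)"
        using segment_bound1[OF w] L0 by (rule mult_left_mono)
      finally show ?thesis .
    qed
  qed auto
  then show ?thesis by (simp add: algebra_simps power2_eq_square)
qed


declare transpose_matrix_vector[simp del]

lemma tdiff: "transpose (A - B) *v v = transpose A *v v - transpose (B::real^'n^'m) *v v"
  by (simp add: transpose_def matrix_vector_mult_def vec_eq_iff sum_subtractf algebra_simps)

lemma mv_add: "(A::real^'n^'m) *v (v + w) = A *v v + A *v w"
  by (simp add: matrix_vector_right_distrib)

lemma mv_diff: "(A::real^'n^'m) *v (v - w) = A *v v - A *v w"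
  by (simp add: matrix_vector_mult_diff_distrib)

lemma mv_minus: "(A::real^'n^'m) *v (- v) = - (A *v v)"
  by (metis diff_0 mv_diff matrix_vector_mult_0_right)

lemma inner_t: "inner u (transpose A *v w) = inner (A *v u) (w::real^'m)"
  for A :: "real^'n^'m"
  by (metis adj inner_commute)

lemma powr_facts:
  fixes D r :: real
  assumes "0 < D" "D \<le> 1" "0 \<le> r" "r \<le> 1"
  shows "D powr (1 + r) = D * D powr r" "D\<^sup>2 \<le> D powr (1 + r)" "D powr (1 + r) \<le> D"
    "D powr r \<le> 1"
proof -
  show e: "D powr (1 + r) = D * D powr r" using assms by (simp add: powr_add)
  have r1: "D powr r \<le> 1" using powr_mono2[of r D 1] assms by simp
  then show "D powr r \<le> 1" .
  have "D powr 1 \<le> D powr r" using powr_mono'[of r 1 D] assms by simp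
  then have "D \<le> D powr r" using assms by simp
  then show "D\<^sup>2 \<le> D powr (1 + r)" unfolding e power2_eq_square
    using assms by (simp add: mult_left_mono)
  show "D powr (1 + r) \<le> D" unfolding e using r1 assms
    by (simp add: mult_left_le)
qed

lemma norm6:
  fixes v1 a v3 v4 v5 v6 :: "'a::real_normed_vector"
  shows "norm (v1 + (- a - v3) + v4 + v5 + v6) \<le> norm v1 + norm a + norm v3 + norm v4 + norm v5 + norm v6"
proof -
  have 0: "norm (- a - v3) \<le> norm a + norm v3" using norm_triangle_ineq4[of "-a" v3] by simp
  have 1: "norm (v1 + (- a - v3) + v4 + v5 + v6) \<le> norm (v1 + (- a - v3) + v4 + v5) + norm v6" by (rule norm_triangle_ineq)
  have 2: "norm (v1 + (- a - v3) + v4 + v5) \<le> norm (v1 + (- a - v3) + v4) + norm v5" by (rule norm_triangle_ineq)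
  have 3: "norm (v1 + (- a - v3) + v4) \<le> norm (v1 + (- a - v3)) + norm v4" by (rule norm_triangle_ineq)
  have 4: "norm (v1 + (- a - v3)) \<le> norm v1 + norm (- a - v3)" by (rule norm_triangle_ineq)
  show ?thesis using 0 1 2 3 4 by linarith
qed

locale lmss =
  fixes F :: "real^'n \<Rightarrow> real^'m"
    and J :: "real^'n \<Rightarrow> real^'n^'m"
    and L :: "real^'n^'p"
    and xs :: "real^'n"
    and \<gamma> \<delta> L0 \<omega> r C :: real
  assumes F_deriv: "\<And>x. (F has_derivative (\<lambda>h. J x *v h)) (at x)"
    and xs_stat: "xs \<in> stat_set F J"
    and Xclosed: "closed (stat_set F J)"
    and A1: "\<gamma> > 0" "\<And>x v. x \<in> cball xs \<delta> \<Longrightarrow>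
               (norm (J x *v v)) ^ 2 + (norm (L *v v)) ^ 2 \<ge> \<gamma> * (norm v) ^ 2"
    and A2: "0 < \<delta>" "\<delta> < 1" "L0 > 0"
            "\<And>x y. x \<in> cball xs \<delta> \<Longrightarrow> y \<in> cball xs \<delta> \<Longrightarrow>
               spec_norm (J x - J y) \<le> L0 * norm (x - y)"
    and A3: "\<omega> > 0" "\<And>x. x \<in> cball xs \<delta> \<Longrightarrow>
               \<omega> * infdist x (stat_set F J) \<le> norm (transpose (J x) *v F x)"
    and A4: "0 < r" "r \<le> 1" "C \<ge> 0"
            "\<And>x z. x \<in> cball xs \<delta> \<Longrightarrow> z \<in> stat_set F J \<inter> cball xs \<delta> \<Longrightarrow>
               norm (transpose (J x - J z) *v F z) \<le> C * norm (x - z) powr (1 + r)"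
begin

abbreviation "X \<equiv> stat_set F J"
abbreviation "g x \<equiv> transpose (J x) *v F x"

definition "BJ = spec_norm (J xs) + L0"
definition "BL = spec_norm L"
definition "Ka = C + 2 * BJ * L0"
definition "K = Ka + BJ\<^sup>2"
definition "AA = Ka / \<omega> powr r"
definition "cu = 1 + (BL\<^sup>2 + 2 * AA) / \<gamma>"
definition "c1 = cu + 1"
definition "c2 = (C * cu powr (1 + r) + Ka + K powr r * BL\<^sup>2 * c1 + 2 * BJ * L0 * c1 * cu + 2 * BJ * L0 * cu\<^sup>2) / \<omega>"

lemma consts_nonneg: "BJ \<ge> L0" "BL \<ge> 0" "Ka \<ge> 0" "K \<ge> 0" "AA \<ge> 0" "cu \<ge> 1" "c1 \<ge> 2" "c2 \<ge> 0"
proof -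
  show b: "BJ \<ge> L0" unfolding BJ_def using spec_norm_nonneg[of "J xs"] by simp
  show bl: "BL \<ge> 0" unfolding BL_def by (rule spec_norm_nonneg)
  show ka: "Ka \<ge> 0" unfolding Ka_def using b A2 A4 by simp
  show k: "K \<ge> 0" unfolding K_def using ka by simp
  show aa: "AA \<ge> 0" unfolding AA_def using ka by simp
  show cu: "cu \<ge> 1" unfolding cu_def using aa A1 by simp
  show c1: "c1 \<ge> 2" unfolding c1_def using cu by simp
  have bj: "BJ \<ge> 0" using b A2(3) by linarith
  have t1: "C * cu powr (1 + r) \<ge> 0" using A4(3) by simp
  have t2: "K powr r * BL\<^sup>2 * c1 \<ge> 0" using c1 by simp
  have t3: "2 * BJ * L0 * c1 * cu \<ge> 0" using bj A2(3) c1 cu by simp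
  have t4: "2 * BJ * L0 * cu\<^sup>2 \<ge> 0" using bj A2(3) by simp
  have "C * cu powr (1 + r) + Ka + K powr r * BL\<^sup>2 * c1 + 2 * BJ * L0 * c1 * cu + 2 * BJ * L0 * cu\<^sup>2 \<ge> 0"
    using t1 t2 t3 t4 ka by linarith
  then show "c2 \<ge> 0" unfolding c2_def using A3(1) by simp
qed

lemma specJ: "x \<in> cball xs \<delta> \<Longrightarrow> spec_norm (J x) \<le> BJ"
proof -
  assume x: "x \<in> cball xs \<delta>"
  have "norm (J x *v v) \<le> BJ * norm v" for v
  proof -
    have "J x *v v = J xs *v v + (J x - J xs) *v v" by (simp add: algebra_simps)
    then have "norm (J x *v v) \<le> norm (J xs *v v) + norm ((J x - J xs) *v v)"
      by (metis norm_triangle_ineq)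
    also have "\<dots> \<le> spec_norm (J xs) * norm v + spec_norm (J x - J xs) * norm v"
      by (intro add_mono mv_bound)
    also have "spec_norm (J x - J xs) \<le> L0"
    proof -
      have "spec_norm (J x - J xs) \<le> L0 * norm (x - xs)" using A2(4)[OF x] x A2 by simp
      also have "\<dots> \<le> L0 * 1" using x A2 by (intro mult_left_mono) (auto simp: dist_norm norm_minus_commute)
      finally show ?thesis by simp
    qed
    then have "spec_norm (J x - J xs) * norm v \<le> L0 * norm v" by (simp add: mult_right_mono)
    finally show ?thesis unfolding BJ_def by (simp add: algebra_simps)
  qed
  then show ?thesis unfolding spec_norm_def by (intro onorm_le)
qed


lemma mvt2:
  assumes "x \<in> cball xs \<delta>" "z \<in> cball xs \<delta>"
  shows "norm (F x - F z - J x *v (x - z)) \<le> 2 * L0 * norm (x - z) ^ 2"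
proof -
  have m: "norm (F x - F z - J z *v (x - z)) \<le> L0 * norm (x - z) ^ 2"
    by (rule mvt[OF F_deriv A2(4) convex_cball assms]) (use A2 in auto)
  have j: "norm ((J x - J z) *v (x - z)) \<le> L0 * norm (x - z) ^ 2"
  proof -
    have "norm ((J x - J z) *v (x - z)) \<le> spec_norm (J x - J z) * norm (x - z)" by (rule mv_bound)
    also have "\<dots> \<le> (L0 * norm (x - z)) * norm (x - z)"
      by (intro mult_right_mono A2(4) assms) simp
    finally show ?thesis by (simp add: power2_eq_square mult.assoc)
  qed
  have "F x - F z - J x *v (x - z) = (F x - F z - J z *v (x - z)) - (J x - J z) *v (x - z)"
    by (simp add: algebra_simps)
  then have "norm (F x - F z - J x *v (x - z)) \<le> norm (F x - F z - J z *v (x - z)) + norm ((J x - J z) *v (x - z))"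
    by (metis norm_triangle_ineq4)
  then show ?thesis using m j by simp
qed

lemma Jbd: "x \<in> cball xs \<delta> \<Longrightarrow> norm (J x *v v) \<le> BJ * norm v"
  by (rule order_trans[OF mv_bound mult_right_mono[OF specJ norm_ge_zero]])

lemma JTbd: "x \<in> cball xs \<delta> \<Longrightarrow> norm (transpose (J x) *v v) \<le> BJ * norm v"
  by (rule order_trans[OF tmv_bound mult_right_mono[OF specJ norm_ge_zero]])

lemma Lipbd: "x \<in> cball xs \<delta> \<Longrightarrow> y \<in> cball xs \<delta> \<Longrightarrow> norm ((J x - J y) *v v) \<le> L0 * norm (x - y) * norm v"
  by (rule order_trans[OF mv_bound mult_right_mono[OF A2(4) norm_ge_zero]])

lemma LipTbd: "x \<in> cball xs \<delta> \<Longrightarrow> y \<in> cball xs \<delta> \<Longrightarrow> norm (transpose (J x - J y) *v v) \<le> L0 * norm (x - y) * norm v"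
  by (rule order_trans[OF tmv_bound mult_right_mono[OF A2(4) norm_ge_zero]])

lemma step:
  assumes x: "x \<in> cball xs \<delta>" and z: "z \<in> X" "z \<in> cball xs \<delta>"
    and Dz: "infdist x X = norm (x - z)"
    and D1: "norm (x - z) \<le> 1" "K * norm (x - z) \<le> 1"
    and gx: "g x \<noteq> 0"
    and hd: "(transpose (J x) ** J x + (norm (g x) powr r) *\<^sub>R (transpose L ** L)) *v d = - g x"
  shows "norm d \<le> c1 * norm (x - z)"
    and "x + d \<in> cball xs \<delta> \<Longrightarrow> infdist (x + d) X \<le> c2 * norm (x - z) powr (1 + r)"
proof -
  define D where "D = norm (x - z)"
  define e where "e = x - z"
  define lam where "lam = norm (g x) powr r"
  define u where "u = d + e"
  have nc: "BJ \<ge> L0" "BL \<ge> 0" "Ka \<ge> 0" "K \<ge> 0" "AA \<ge> 0" "cu \<ge> 1" "c1 \<ge> 2" "c2 \<ge> 0"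
    by (rule consts_nonneg)+
  have hz0: "g z = 0" using z(1) by (simp add: stat_set_def)
  have Dpos: "D > 0"
  proof (rule ccontr)
    assume "\<not> D > 0"
    then have "x = z" unfolding D_def by simp
    then show False using gx hz0 by simp
  qed
  have D1': "D \<le> 1" "K * D \<le> 1" using D1 by (simp_all add: D_def)
  note pf = powr_facts[OF Dpos D1'(1) less_imp_le[OF A4(1)] A4(2)]
  have eD: "norm e = D" by (simp add: e_def D_def)
  define R where "R = F x - F z - J x *v e"
  have Rb: "norm R \<le> 2 * L0 * D\<^sup>2" unfolding R_def e_def D_def by (rule mvt2[OF x z(2)])
  define a where "a = transpose (J x - J z) *v F z + transpose (J x) *v R"
  have ga: "g x = a + transpose (J x) *v (J x *v e)"
  proof -
    have "F x = F z + J x *v e + R" by (simp add: R_def)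
    then have "g x = transpose (J x) *v F z + transpose (J x) *v (J x *v e) + transpose (J x) *v R"
      by (simp add: mv_add)
    moreover have "transpose (J x - J z) *v F z = transpose (J x) *v F z"
      using hz0 by (simp add: tdiff)
    ultimately show ?thesis by (simp add: a_def algebra_simps)
  qed
  have ab: "norm a \<le> Ka * D powr (1 + r)"
  proof -
    have 1: "norm (transpose (J x - J z) *v F z) \<le> C * D powr (1 + r)"
      unfolding D_def using A4(4)[OF x] z by simp
    have "norm (transpose (J x) *v R) \<le> spec_norm (J x) * norm R" by (rule tmv_bound)
    also have "\<dots> \<le> BJ * (2 * L0 * D\<^sup>2)"
      using specJ[OF x] Rb spec_norm_nonneg[of "J x"] nc A2 by (intro mult_mono) auto
    also have "\<dots> \<le> BJ * (2 * L0 * D powr (1 + r))"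
      using pf nc A2 by (intro mult_left_mono) auto
    finally have 2: "norm (transpose (J x) *v R) \<le> 2 * BJ * L0 * D powr (1 + r)" by simp
    have "norm a \<le> norm (transpose (J x - J z) *v F z) + norm (transpose (J x) *v R)"
      unfolding a_def by (rule norm_triangle_ineq)
    then show ?thesis using 1 2 by (simp add: Ka_def algebra_simps)
  qed
  have gb: "norm (g x) \<le> K * D"
  proof -
    have "norm (transpose (J x) *v (J x *v e)) \<le> spec_norm (J x) * norm (J x *v e)" by (rule tmv_bound)
    also have "\<dots> \<le> BJ * (BJ * D)"
    proof -
      have "norm (J x *v e) \<le> BJ * D" using Jbd[OF x, of e] eD by simp
      then show ?thesis using specJ[OF x] spec_norm_nonneg[of "J x"] nc A2 by (intro mult_mono) auto
    qed
    finally have 1: "norm (transpose (J x) *v (J x *v e)) \<le> BJ\<^sup>2 * D" by (simp add: power2_eq_square)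
    have "norm (g x) \<le> norm a + norm (transpose (J x) *v (J x *v e))"
      unfolding ga by (rule norm_triangle_ineq)
    also have "\<dots> \<le> Ka * D + BJ\<^sup>2 * D"
    proof -
      have "Ka * D powr (1 + r) \<le> Ka * D" using pf(3) nc by (intro mult_left_mono) auto
      then show ?thesis using ab 1 by linarith
    qed
    finally show ?thesis by (simp add: K_def algebra_simps)
  qed
  have lam_lo: "lam \<ge> \<omega> powr r * D powr r"
  proof -
    have "\<omega> * D \<le> norm (g x)" using A3(2)[OF x] Dz by (simp add: D_def)
    then have "(\<omega> * D) powr r \<le> lam" unfolding lam_def
      using A3(1) Dpos A4(1) by (intro powr_mono2) auto
    then show ?thesis using A3(1) Dpos by (simp add: powr_mult)
  qed
  have lam_hi: "lam \<le> K powr r * D powr r"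
  proof -
    have "lam \<le> (K * D) powr r" unfolding lam_def using gb A4(1) by (intro powr_mono2) auto
    then show ?thesis using nc Dpos by (simp add: powr_mult)
  qed
  have lam_pos: "lam > 0" unfolding lam_def using gx by simp
  have lam1: "lam \<le> 1"
  proof -
    have "lam \<le> (K * D) powr r" unfolding lam_def using gb A4(1) by (intro powr_mono2) auto
    also have "\<dots> \<le> 1 powr r" using D1' nc Dpos A4(1) by (intro powr_mono2) auto
    finally show ?thesis by simp
  qed
  have hM: "transpose (J x) *v (J x *v d) + lam *\<^sub>R (transpose L *v (L *v d)) = - g x"
    using hd unfolding lam_def
    by (simp add: matrix_vector_mult_add_rdistrib matrix_vector_mul_assoc scaleR_matrix_vector_assoc)
  have hu: "transpose (J x) *v (J x *v u) + lam *\<^sub>R (transpose L *v (L *v u)) = - a + lam *\<^sub>R (transpose L *v (L *v e))"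
  proof -
    have "transpose (J x) *v (J x *v u) + lam *\<^sub>R (transpose L *v (L *v u)) =
      (transpose (J x) *v (J x *v d) + lam *\<^sub>R (transpose L *v (L *v d))) + transpose (J x) *v (J x *v e) + lam *\<^sub>R (transpose L *v (L *v e))"
      by (simp add: u_def mv_add algebra_simps)
    also have "\<dots> = - g x + transpose (J x) *v (J x *v e) + lam *\<^sub>R (transpose L *v (L *v e))"
      using hM by simp
    also have "\<dots> = - a + lam *\<^sub>R (transpose L *v (L *v e))" by (simp add: ga)
    finally show ?thesis .
  qed
  have hJu: "transpose (J x) *v (J x *v u) = - a - lam *\<^sub>R (transpose L *v (L *v d))"
  proof -
    have "transpose (J x) *v (J x *v u) = - a + lam *\<^sub>R (transpose L *v (L *v e)) - lam *\<^sub>R (transpose L *v (L *v u))"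
      using hu by (simp only: eq_diff_eq)
    also have "\<dots> = - a - lam *\<^sub>R (transpose L *v (L *v d))"
      by (simp add: u_def mv_add algebra_simps)
    finally show ?thesis .
  qed
  define t where "t = norm u"
  define p where "p = norm (J x *v u)"
  define q where "q = norm (L *v u)"
  define s where "s = norm (L *v e)"
  define \<alpha> where "\<alpha> = norm a"
  have en: "p\<^sup>2 + lam * q\<^sup>2 \<le> t * \<alpha> + lam * (q * s)"
  proof -
    have i1: "inner u (transpose (J x) *v (J x *v u) + lam *\<^sub>R (transpose L *v (L *v u))) = p\<^sup>2 + lam * q\<^sup>2"
      by (simp add: inner_add_right inner_t p_def q_def power2_norm_eq_inner)
    have i2: "inner u (- a + lam *\<^sub>R (transpose L *v (L *v e))) = - inner u a + lam * inner (L *v u) (L *v e)"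
      by (simp add: inner_add_right inner_diff_right inner_t)
    have eq: "p\<^sup>2 + lam * q\<^sup>2 = - inner u a + lam * inner (L *v u) (L *v e)"
      using i1 i2 unfolding hu by simp
    have c1: "- inner u a \<le> t * \<alpha>" unfolding t_def \<alpha>_def
      using norm_cauchy_schwarz[of "-u" a] by simp
    have c2: "inner (L *v u) (L *v e) \<le> q * s" unfolding q_def s_def by (rule norm_cauchy_schwarz)
    have c3: "lam * inner (L *v u) (L *v e) \<le> lam * (q * s)"
      using lam_pos c2 by (intro mult_left_mono) auto
    show ?thesis using eq c1 c3 by linarith
  qed
  have A1x: "\<gamma> * t\<^sup>2 \<le> p\<^sup>2 + q\<^sup>2" using A1(2)[OF x, of u] by (simp add: t_def p_def q_def)
  have sb: "s \<le> BL * D" unfolding s_def BL_def using mv_bound[of L e] eD by simp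
  have \<alpha>b: "\<alpha> \<le> AA * D * lam"
  proof -
    have "\<alpha> \<le> Ka * (D * D powr r)" using ab pf(1) by (simp add: \<alpha>_def)
    also have "\<dots> = AA * D * (\<omega> powr r * D powr r)" using A3(1) by (simp add: AA_def)
    also have "\<dots> \<le> AA * D * lam" using lam_lo nc Dpos by (intro mult_left_mono) auto
    finally show ?thesis .
  qed
  have key: "lam * \<gamma> * t\<^sup>2 \<le> 2 * t * \<alpha> + lam * s\<^sup>2"
  proof -
    have 1: "lam * (\<gamma> * t\<^sup>2) \<le> lam * (p\<^sup>2 + q\<^sup>2)" using A1x lam_pos by (simp add: mult_left_mono)
    have 2: "lam * p\<^sup>2 \<le> p\<^sup>2" using lam1 lam_pos by (simp add: mult_left_le_one_le zero_le_power2)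
    have 3: "lam * (q * s) \<le> lam * ((q\<^sup>2 + s\<^sup>2) / 2)" using lam_pos sum_squares_bound[of q s]
      by (intro mult_left_mono) auto
    have 4: "0 \<le> lam * p\<^sup>2" using lam_pos by simp
    show ?thesis using en 1 2 3 4 by (simp add: algebra_simps)
  qed
  have key2: "\<gamma> * t\<^sup>2 \<le> 2 * AA * D * t + BL\<^sup>2 * D\<^sup>2"
  proof -
    have "lam * (\<gamma> * t\<^sup>2) \<le> lam * (2 * AA * D * t + s\<^sup>2)"
    proof -
      have "2 * t * \<alpha> \<le> 2 * t * (AA * D * lam)"
        using \<alpha>b by (intro mult_left_mono) (auto simp: t_def)
      then show ?thesis using key by (simp add: algebra_simps)
    qed
    then have "\<gamma> * t\<^sup>2 \<le> 2 * AA * D * t + s\<^sup>2" using lam_pos by simp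
    moreover have "s\<^sup>2 \<le> (BL * D) ^ 2" using sb s_def by (intro power_mono) auto
    ultimately show ?thesis by (simp add: power_mult_distrib)
  qed
  have tb: "t \<le> cu * D"
  proof (cases "t \<le> D")
    case True
    have "D \<le> cu * D" using nc Dpos by simp
    then show ?thesis using True by linarith
  next
    case False
    have "BL\<^sup>2 * D * D \<le> BL\<^sup>2 * D * t" using False Dpos by (intro mult_left_mono) auto
    then have "BL\<^sup>2 * D\<^sup>2 \<le> BL\<^sup>2 * D * t" by (simp add: power2_eq_square)
    then have "\<gamma> * t * t \<le> ((BL\<^sup>2 + 2 * AA) * D) * t" using key2
      by (simp add: power2_eq_square algebra_simps)
    then have "\<gamma> * t \<le> (BL\<^sup>2 + 2 * AA) * D" using False Dpos by simp
    then have "t \<le> (BL\<^sup>2 + 2 * AA) / \<gamma> * D" using A1(1) by (simp add: field_simps)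
    also have "\<dots> \<le> cu * D" unfolding cu_def using Dpos by (simp add: algebra_simps)
    finally show ?thesis .
  qed
  have db: "norm d \<le> c1 * D"
  proof -
    have "d = u - e" by (simp add: u_def)
    then have "norm d \<le> t + D" using norm_triangle_ineq4[of u e] eD by (simp add: t_def)
    then show ?thesis using tb by (simp add: c1_def algebra_simps)
  qed
  then show "norm d \<le> c1 * norm (x - z)" by (simp add: D_def)
  show "infdist (x + d) X \<le> c2 * norm (x - z) powr (1 + r)" if y: "x + d \<in> cball xs \<delta>"
  proof -
    define y where "y = x + d"
    define P where "P = D powr (1 + r)"
    have yb: "y \<in> cball xs \<delta>" using y by (simp add: y_def)
    have yz: "y - z = u" by (simp add: y_def u_def e_def)
    have yx: "y - x = d" by (simp add: y_def)
    define R2 where "R2 = F y - F z - J y *v u"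
    have R2b: "norm R2 \<le> 2 * L0 * t ^ 2" unfolding R2_def t_def using mvt2[OF yb z(2)] yz by simp
    have gy: "g y = transpose (J y - J z) *v F z + (- a - lam *\<^sub>R (transpose L *v (L *v d)))
       + transpose (J y - J x) *v (J y *v u) + transpose (J x) *v ((J y - J x) *v u) + transpose (J y) *v R2"
    proof -
      have "F y = F z + J y *v u + R2" by (simp add: R2_def)
      then have "g y = transpose (J y) *v F z + transpose (J y) *v (J y *v u) + transpose (J y) *v R2"
        by (simp add: mv_add)
      moreover have "transpose (J y) *v F z = transpose (J y - J z) *v F z" using hz0 by (simp add: tdiff)
      moreover have "transpose (J y) *v (J y *v u) = transpose (J x) *v (J x *v u)
         + transpose (J y - J x) *v (J y *v u) + transpose (J x) *v ((J y - J x) *v u)"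
        by (simp add: tdiff matrix_vector_mult_diff_rdistrib mv_diff)
      ultimately show ?thesis using hJu by simp
    qed
    have DP: "D ^ 2 \<le> P" using pf(2) by (simp add: P_def)
    have P0: "P \<ge> 0" by (simp add: P_def)
    have t0: "t \<ge> 0" by (simp add: t_def)
    have b1: "norm (transpose (J y - J z) *v F z) \<le> C * cu powr (1 + r) * P"
    proof -
      have "norm (transpose (J y - J z) *v F z) \<le> C * t powr (1 + r)"
        using A4(4)[OF yb, of z] z yz by (simp add: t_def)
      also have "\<dots> \<le> C * (cu * D) powr (1 + r)"
        using tb t0 A4 by (intro mult_left_mono powr_mono2) auto
      also have "\<dots> = C * cu powr (1 + r) * P" using nc Dpos by (simp add: powr_mult P_def)
      finally show ?thesis .
    qed
    have b3: "norm (lam *\<^sub>R (transpose L *v (L *v d))) \<le> K powr r * BL ^ 2 * c1 * P"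
    proof -
      have "norm (transpose L *v (L *v d)) \<le> BL * (BL * norm d)"
        unfolding BL_def by (rule order_trans[OF tmv_bound mult_left_mono[OF mv_bound spec_norm_nonneg]])
      also have "\<dots> \<le> BL * (BL * (c1 * D))" using db nc by (intro mult_left_mono) auto
      finally have 1: "norm (transpose L *v (L *v d)) \<le> BL ^ 2 * c1 * D" by (simp add: power2_eq_square)
      have "norm (lam *\<^sub>R (transpose L *v (L *v d))) = lam * norm (transpose L *v (L *v d))"
        using lam_pos by simp
      also have "\<dots> \<le> (K powr r * D powr r) * (BL ^ 2 * c1 * D)"
        using lam_hi 1 lam_pos by (intro mult_mono) auto
      also have "\<dots> = K powr r * BL ^ 2 * c1 * P" using pf(1) by (simp add: P_def algebra_simps)
      finally show ?thesis .
    qed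
    have dt: "norm d * t \<le> c1 * cu * P"
    proof -
      have "norm d * t \<le> (c1 * D) * (cu * D)" using db tb t0 nc Dpos by (intro mult_mono) auto
      also have "\<dots> = c1 * cu * D ^ 2" by (simp add: power2_eq_square)
      also have "\<dots> \<le> c1 * cu * P" using DP nc by (intro mult_left_mono) auto
      finally show ?thesis .
    qed
    have tt: "t ^ 2 \<le> cu ^ 2 * P"
    proof -
      have "t ^ 2 \<le> (cu * D) ^ 2" using tb t0 by (intro power_mono) auto
      also have "\<dots> = cu ^ 2 * D ^ 2" by (simp add: power_mult_distrib)
      also have "\<dots> \<le> cu ^ 2 * P" using DP by (intro mult_left_mono) auto
      finally show ?thesis .
    qed
    have b4: "norm (transpose (J y - J x) *v (J y *v u)) \<le> BJ * L0 * (norm d * t)"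
    proof -
      have "norm (transpose (J y - J x) *v (J y *v u)) \<le> L0 * norm d * norm (J y *v u)"
        using LipTbd[OF yb x] yx by simp
      also have "\<dots> \<le> L0 * norm d * (BJ * t)"
        using Jbd[OF yb, of u] A2 by (intro mult_left_mono) (auto simp: t_def)
      finally show ?thesis by (simp add: algebra_simps)
    qed
    have b5: "norm (transpose (J x) *v ((J y - J x) *v u)) \<le> BJ * L0 * (norm d * t)"
    proof -
      have "norm (transpose (J x) *v ((J y - J x) *v u)) \<le> BJ * norm ((J y - J x) *v u)"
        using JTbd[OF x] by simp
      also have "\<dots> \<le> BJ * (L0 * norm d * t)"
        using Lipbd[OF yb x, of u] yx nc A2 by (intro mult_left_mono) (auto simp: t_def)
      finally show ?thesis by (simp add: algebra_simps)
    qed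
    have b6: "norm (transpose (J y) *v R2) \<le> 2 * BJ * L0 * t ^ 2"
    proof -
      have "norm (transpose (J y) *v R2) \<le> BJ * norm R2" using JTbd[OF yb] by simp
      also have "\<dots> \<le> BJ * (2 * L0 * t ^ 2)" using R2b nc A2 by (intro mult_left_mono) auto
      finally show ?thesis by simp
    qed
    have bdt: "BJ * L0 * (norm d * t) \<le> BJ * L0 * (c1 * cu * P)"
      using dt nc A2 by (intro mult_left_mono) auto
    have btt: "2 * BJ * L0 * t ^ 2 \<le> 2 * BJ * L0 * (cu ^ 2 * P)"
      using tt nc A2 by (intro mult_left_mono) auto
    have ab': "norm a \<le> Ka * P" using ab by (simp add: P_def)
    have "norm (g y) \<le> norm (transpose (J y - J z) *v F z) + norm a + norm (lam *\<^sub>R (transpose L *v (L *v d)))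
       + norm (transpose (J y - J x) *v (J y *v u)) + norm (transpose (J x) *v ((J y - J x) *v u)) + norm (transpose (J y) *v R2)"
      unfolding gy by (rule norm6)
    also have "\<dots> \<le> (C * cu powr (1 + r) + Ka + K powr r * BL\<^sup>2 * c1 + 2 * BJ * L0 * c1 * cu + 2 * BJ * L0 * cu\<^sup>2) * P"
    proof -
      have "(C * cu powr (1 + r) + Ka + K powr r * BL\<^sup>2 * c1 + 2 * BJ * L0 * c1 * cu + 2 * BJ * L0 * cu\<^sup>2) * P
        = C * cu powr (1 + r) * P + Ka * P + K powr r * BL ^ 2 * c1 * P + BJ * L0 * (c1 * cu * P) + BJ * L0 * (c1 * cu * P) + 2 * BJ * L0 * (cu ^ 2 * P)"
        by (simp add: algebra_simps)
      moreover have "norm (transpose (J y - J z) *v F z) + norm a + norm (lam *\<^sub>R (transpose L *v (L *v d)))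
       + norm (transpose (J y - J x) *v (J y *v u)) + norm (transpose (J x) *v ((J y - J x) *v u)) + norm (transpose (J y) *v R2)
       \<le> C * cu powr (1 + r) * P + Ka * P + K powr r * BL ^ 2 * c1 * P + BJ * L0 * (c1 * cu * P) + BJ * L0 * (c1 * cu * P) + 2 * BJ * L0 * (cu ^ 2 * P)"
        using b1 ab' b3 order_trans[OF b4 bdt] order_trans[OF b5 bdt] order_trans[OF b6 btt] by (intro add_mono)
      ultimately show ?thesis by linarith
    qed
    also have "\<dots> = \<omega> * (c2 * P)" using A3(1) by (simp add: c2_def)
    finally have "\<omega> * infdist y X \<le> \<omega> * (c2 * P)" using A3(2)[OF yb] by linarith
    then have "infdist y X \<le> c2 * P" using A3(1) by simp
    then show ?thesis by (simp add: y_def P_def D_def)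
  qed

qed


definition "rho = \<delta> / (2 + c1 + K)"

lemma rho_facts: "rho > 0" "2 * rho \<le> \<delta>" "(1 + c1) * rho \<le> \<delta>" "K * rho \<le> 1" "rho \<le> 1" "rho \<le> \<delta> / 2"
proof -
  have nc: "K \<ge> 0" "c1 \<ge> 2" by (rule consts_nonneg)+
  have den: "2 + c1 + K > 0" using nc by simp
  have e: "rho * (2 + c1 + K) = \<delta>" unfolding rho_def using den by simp
  show rp: "rho > 0" unfolding rho_def using den A2 by simp
  show 2: "2 * rho \<le> \<delta>"
  proof -
    have "2 * rho \<le> (2 + c1 + K) * rho" using rp nc by (intro mult_right_mono) auto
    then show ?thesis using e by (simp add: mult.commute)
  qed
  show "(1 + c1) * rho \<le> \<delta>"
  proof -
    have "(1 + c1) * rho \<le> (2 + c1 + K) * rho" using rp nc by (intro mult_right_mono) auto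
    then show ?thesis using e by (simp add: mult.commute)
  qed
  show "K * rho \<le> 1"
  proof -
    have "K * rho \<le> (2 + c1 + K) * rho" using rp nc by (intro mult_right_mono) auto
    then show ?thesis using e A2 by (simp add: mult.commute)
  qed
  show "rho \<le> 1" using 2 rp A2 by simp
  show "rho \<le> \<delta> / 2" using 2 by simp
qed

lemma one_step:
  assumes xk: "xk \<in> cball xs rho"
    and rec: "if g xk \<noteq> 0
                 then (\<exists>d. (transpose (J xk) ** J xk
                             + (norm (g xk) powr r) *\<^sub>R (transpose L ** L)) *v d = - g xk
                         \<and> xk' = xk + d)
                 else xk' = xk"
  shows "norm (xk' - xk) \<le> c1 * infdist xk X \<and> infdist xk' X \<le> c2 * infdist xk X powr (1 + r)"
proof (cases "g xk = 0")
  case True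
  then have "xk \<in> X" by (simp add: stat_set_def)
  then have "infdist xk X = 0" by simp
  moreover have "xk' = xk" using rec True by simp
  ultimately show ?thesis by simp
next
  case False
  then obtain d where hd: "(transpose (J xk) ** J xk + (norm (g xk) powr r) *\<^sub>R (transpose L ** L)) *v d = - g xk"
    and xk': "xk' = xk + d" using rec by auto
  have ne: "X \<noteq> {}" using xs_stat by auto
  obtain z where z: "z \<in> X" "infdist xk X = dist xk z" using infdist_attains_inf[OF Xclosed ne] by blast
  have Dz: "infdist xk X = norm (xk - z)" using z by (simp add: dist_norm)
  have rf: "rho > 0" "2 * rho \<le> \<delta>" "(1 + c1) * rho \<le> \<delta>" "K * rho \<le> 1" "rho \<le> 1" by (rule rho_facts)+
  have nc: "K \<ge> 0" "c1 \<ge> 2" by (rule consts_nonneg)+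
  have dxk: "dist xs xk \<le> rho" using xk by simp
  have Dle: "norm (xk - z) \<le> rho"
  proof -
    have "infdist xk X \<le> dist xk xs" using xs_stat by (rule infdist_le)
    then show ?thesis using Dz dxk by (simp add: dist_commute)
  qed
  have xkd: "xk \<in> cball xs \<delta>" using dxk rf by simp
  have zd: "z \<in> cball xs \<delta>"
  proof -
    have "dist xs z \<le> dist xs xk + dist xk z" by (rule dist_triangle)
    then show ?thesis using dxk Dle rf by (simp add: dist_norm)
  qed
  have D1: "norm (xk - z) \<le> 1" using Dle rf by simp
  have D2: "K * norm (xk - z) \<le> 1"
  proof -
    have "K * norm (xk - z) \<le> K * rho" using Dle nc by (intro mult_left_mono) auto
    then show ?thesis using rf by simp
  qed
  note st = step[OF xkd z(1) zd Dz D1 D2 False hd]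
  have yd: "xk + d \<in> cball xs \<delta>"
  proof -
    have "norm d \<le> c1 * rho" using st(1) Dle nc by (meson mult_left_mono order_trans le_numeral_extra(1) dual_order.trans zero_le_numeral)
    then have "dist xs (xk + d) \<le> rho + c1 * rho"
      using dist_triangle[of xs "xk + d" xk] dxk by (simp add: dist_norm)
    then show ?thesis using rf by (simp add: algebra_simps)
  qed
  show ?thesis using st(1) st(2)[OF yd] Dz xk' by simp
qed


lemma main:
  shows "\<exists>\<epsilon>>0. \<forall>x :: nat \<Rightarrow> real^'n.
           x 0 \<in> cball xs \<epsilon> \<longrightarrow>
           (\<forall>k. if transpose (J (x k)) *v F (x k) \<noteq> 0
                 then (\<exists>d. (transpose (J (x k)) ** J (x k)
                             + (norm (transpose (J (x k)) *v F (x k)) powr r) *\<^sub>R (transpose L ** L)) *v d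
                           = - (transpose (J (x k)) *v F (x k))
                         \<and> x (Suc k) = x k + d)
                 else x (Suc k) = x k) \<longrightarrow>
           ((\<lambda>k. infdist (x k) (stat_set F J)) \<longlonglongrightarrow> 0) \<and>
           (\<forall>e>0. eventually (\<lambda>k. infdist (x (Suc k)) (stat_set F J)
                                    \<le> e * infdist (x k) (stat_set F J)) sequentially) \<and>
           (\<exists>xb \<in> stat_set F J \<inter> cball xs (\<delta> / 2). x \<longlonglongrightarrow> xb)"
proof -
  have rf: "rho > 0" "rho \<le> \<delta> / 2" by (rule rho_facts)+
  have nc: "c1 \<ge> 2" "c2 \<ge> 0" by (rule consts_nonneg)+
  define \<epsilon> where "\<epsilon> = min (rho / (1 + 2 * c1)) ((1 / (2 * c2 + 1)) powr (1 / r))"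
  have ep: "\<epsilon> > 0" unfolding \<epsilon>_def using rf nc by simp
  have e1: "(1 + 2 * c1) * \<epsilon> \<le> rho"
  proof -
    have "\<epsilon> \<le> rho / (1 + 2 * c1)" unfolding \<epsilon>_def by simp
    then show ?thesis using nc by (simp add: field_simps)
  qed
  have e2: "c2 * \<epsilon> powr r \<le> 1 / 2"
  proof -
    have "\<epsilon> powr r \<le> ((1 / (2 * c2 + 1)) powr (1 / r)) powr r"
      unfolding \<epsilon>_def using ep A4(1) \<epsilon>_def by (intro powr_mono2) auto
    also have "\<dots> = 1 / (2 * c2 + 1)" using A4(1) nc by (simp add: powr_powr)
    finally have "c2 * \<epsilon> powr r \<le> c2 * (1 / (2 * c2 + 1))" using nc by (intro mult_left_mono) auto
    also have "\<dots> \<le> 1 / 2" using nc by (simp add: field_simps)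
    finally show ?thesis .
  qed
  have e3: "\<epsilon> \<le> rho"
  proof -
    have "1 * \<epsilon> \<le> (1 + 2 * c1) * \<epsilon>" using ep nc by (intro mult_right_mono) auto
    then show ?thesis using e1 by simp
  qed
  show ?thesis
  proof (intro exI[of _ \<epsilon>] conjI allI impI ep)
    fix x :: "nat \<Rightarrow> real^'n"
    assume x0: "x 0 \<in> cball xs \<epsilon>"
    assume rec: "\<forall>k. if g (x k) \<noteq> 0
                 then (\<exists>d. (transpose (J (x k)) ** J (x k)
                             + (norm (g (x k)) powr r) *\<^sub>R (transpose L ** L)) *v d = - g (x k)
                         \<and> x (Suc k) = x k + d)
                 else x (Suc k) = x k"
    define D where "D k = infdist (x k) X" for k
    have D0: "D 0 \<le> \<epsilon>"
    proof -
      have "infdist (x 0) X \<le> dist (x 0) xs" using xs_stat by (rule infdist_le)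
      then show ?thesis using x0 by (simp add: D_def dist_commute)
    qed
    have Dnn: "D k \<ge> 0" for k by (simp add: D_def infdist_nonneg)
    have os: "x k \<in> cball xs rho \<Longrightarrow> norm (x (Suc k) - x k) \<le> c1 * D k \<and> D (Suc k) \<le> c2 * D k powr (1 + r)" for k
      unfolding D_def using rec by (intro one_step) auto
    have inv: "x k \<in> cball xs rho \<and> D k \<le> D 0 * (1/2) ^ k \<and> norm (x k - x 0) \<le> 2 * c1 * D 0 * (1 - (1/2) ^ k)" for k
    proof (induction k)
      case 0 then show ?case using x0 e3 by auto
    next
      case (Suc k)
      then have xk: "x k \<in> cball xs rho" and Dk: "D k \<le> D 0 * (1/2) ^ k"
        and nk: "norm (x k - x 0) \<le> 2 * c1 * D 0 * (1 - (1/2) ^ k)" by auto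
      have s1: "norm (x (Suc k) - x k) \<le> c1 * D k" and s2: "D (Suc k) \<le> c2 * D k powr (1 + r)"
        using os[OF xk] by auto
      have Dke: "D k \<le> \<epsilon>"
      proof -
        have "D 0 * (1/2) ^ k \<le> D 0 * 1" using Dnn[of 0] by (intro mult_left_mono) (auto simp: power_le_one)
        then show ?thesis using Dk D0 by simp
      qed
      have "D k powr (1 + r) = D k * D k powr r" using Dnn[of k] by (simp add: powr_add)
      moreover have "D k powr r \<le> \<epsilon> powr r" using Dke Dnn[of k] A4(1) by (intro powr_mono2) auto
      ultimately have "c2 * D k powr (1 + r) \<le> D k * (c2 * \<epsilon> powr r)"
      proof -
        assume h1: "D k powr (1 + r) = D k * D k powr r" and h2: "D k powr r \<le> \<epsilon> powr r"
        have "D k * (c2 * D k powr r) \<le> D k * (c2 * \<epsilon> powr r)"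
          using h2 nc Dnn[of k] by (intro mult_left_mono) auto
        then show ?thesis using h1 by (simp add: algebra_simps)
      qed
      also have "\<dots> \<le> D k * (1/2)" using e2 Dnn[of k] by (intro mult_left_mono) auto
      finally have Dsk: "D (Suc k) \<le> D 0 * (1/2) ^ Suc k" using s2 Dk by simp
      have "norm (x (Suc k) - x 0) \<le> norm (x k - x 0) + norm (x (Suc k) - x k)"
        using norm_triangle_ineq[of "x k - x 0" "x (Suc k) - x k"] by simp
      also have "\<dots> \<le> 2 * c1 * D 0 * (1 - (1/2) ^ k) + c1 * (D 0 * (1/2) ^ k)"
        using nk s1 Dk nc by (smt (verit) mult_left_mono)
      also have "\<dots> = 2 * c1 * D 0 * (1 - (1/2) ^ Suc k)" by (simp add: algebra_simps)
      finally have nsk: "norm (x (Suc k) - x 0) \<le> 2 * c1 * D 0 * (1 - (1/2) ^ Suc k)" .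
      have "dist xs (x (Suc k)) \<le> dist xs (x 0) + norm (x (Suc k) - x 0)"
        using dist_triangle[of xs "x (Suc k)" "x 0"] by (simp add: dist_norm norm_minus_commute)
      also have "\<dots> \<le> \<epsilon> + 2 * c1 * \<epsilon>"
      proof -
        have "2 * c1 * D 0 * (1 - (1/2) ^ Suc k) \<le> 2 * c1 * D 0 * 1"
          using nc Dnn[of 0] by (intro mult_left_mono) auto
        also have "\<dots> \<le> 2 * c1 * \<epsilon>" using D0 nc by simp
        finally show ?thesis using x0 nsk by simp
      qed
      also have "\<dots> \<le> rho" using e1 by (simp add: algebra_simps)
      finally show ?case using Dsk nsk by simp
    qed
    have s1: "norm (x (Suc k) - x k) \<le> c1 * D 0 * (1/2) ^ k" for k
    proof -
      have "norm (x (Suc k) - x k) \<le> c1 * D k" using os inv by blast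
      also have "\<dots> \<le> c1 * (D 0 * (1/2) ^ k)" using inv nc by (intro mult_left_mono) auto
      finally show ?thesis by simp
    qed
    have s2: "D (Suc k) \<le> c2 * D k powr (1 + r)" for k using os inv by blast
    have geo: "(\<lambda>k. D 0 * (1/2::real) ^ k) \<longlonglongrightarrow> 0"
      by (intro tendsto_mult_right_zero LIMSEQ_realpow_zero) auto
    have Dlim: "D \<longlonglongrightarrow> 0"
      by (rule Lim_null_comparison[OF _ geo]) (use inv Dnn in \<open>auto intro: always_eventually\<close>)
    show "(\<lambda>k. infdist (x k) X) \<longlonglongrightarrow> 0" using Dlim by (simp add: D_def[abs_def])
    show "eventually (\<lambda>k. infdist (x (Suc k)) X \<le> e * infdist (x k) X) sequentially" if e: "e > 0" for e
    proof -
      have "(\<lambda>k. D k powr r) \<longlonglongrightarrow> 0"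
        by (rule tendsto_zero_powrI[OF Dlim tendsto_const]) (use Dnn A4(1) in auto)
      then have "(\<lambda>k. c2 * D k powr r) \<longlonglongrightarrow> 0" by (rule tendsto_mult_right_zero)
      then have ev: "eventually (\<lambda>k. c2 * D k powr r < e) sequentially"
        using e by (rule order_tendstoD(2))
      show ?thesis
        using ev
      proof eventually_elim
        case (elim k)
        have "D k powr (1 + r) = D k * D k powr r" using Dnn[of k] by (simp add: powr_add)
        then have "D (Suc k) \<le> (c2 * D k powr r) * D k" using s2[of k] by (simp add: algebra_simps)
        also have "\<dots> \<le> e * D k" using elim Dnn[of k] by (intro mult_right_mono) auto
        finally show ?case by (simp add: D_def)
      qed
    qed
    have sn: "summable (\<lambda>k. norm (x (Suc k) - x k))"
    proof (rule summable_comparison_test[where g = "\<lambda>k. c1 * D 0 * (1/2) ^ k"])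
      show "\<exists>N. \<forall>n\<ge>N. norm (norm (x (Suc n) - x n)) \<le> c1 * D 0 * (1/2) ^ n" using s1 by auto
      show "summable (\<lambda>k. c1 * D 0 * (1/2::real) ^ k)"
        by (intro summable_mult summable_geometric) auto
    qed
    then have sm: "summable (\<lambda>k. x (Suc k) - x k)" by (rule summable_norm_cancel)
    define S where "S = (\<Sum>k. x (Suc k) - x k)"
    have "(\<lambda>n. \<Sum>k<n. x (Suc k) - x k) \<longlonglongrightarrow> S" unfolding S_def by (rule summable_LIMSEQ[OF sm])
    then have "(\<lambda>n. x n - x 0) \<longlonglongrightarrow> S" by (simp add: sum_lessThan_telescope)
    then have "(\<lambda>n. x 0 + (x n - x 0)) \<longlonglongrightarrow> x 0 + S" by (intro tendsto_add tendsto_const)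
    then have xlim: "x \<longlonglongrightarrow> x 0 + S" by simp
    have inball: "x 0 + S \<in> cball xs rho"
      by (rule Lim_in_closed_set[OF closed_cball _ _ xlim]) (use inv in \<open>auto intro: always_eventually\<close>)
    have "(\<lambda>k. infdist (x k) X) \<longlonglongrightarrow> infdist (x 0 + S) X" by (intro tendsto_infdist xlim)
    moreover have "(\<lambda>k. infdist (x k) X) \<longlonglongrightarrow> 0" using Dlim by (simp add: D_def[abs_def])
    ultimately have "infdist (x 0 + S) X = 0" by (rule LIMSEQ_unique)
    then have inX: "x 0 + S \<in> X" using in_closed_iff_infdist_zero[OF Xclosed] xs_stat by auto
    have "x 0 + S \<in> cball xs (\<delta> / 2)" using inball rf by auto
    then show "\<exists>xb \<in> X \<inter> cball xs (\<delta> / 2). x \<longlonglongrightarrow> xb" using inX xlim by blast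
  qed
qed

end

theorem mainTheorem10:
  fixes F :: "real^'n \<Rightarrow> real^'m"
    and J :: "real^'n \<Rightarrow> real^'n^'m"
    and L :: "real^'n^'p"
    and xs :: "real^'n"
    and \<gamma> \<delta> L0 \<omega> r C :: real
  assumes mn: "CARD('n) \<le> CARD('m)"
    and F_deriv: "\<And>x. (F has_derivative (\<lambda>h. J x *v h)) (at x)"
    and F_C2: "\<exists>J'. (\<forall>x. (J has_derivative (blinfun_apply (J' x))) (at x)) \<and> continuous_on UNIV J'"
    and L_rank: "rank L = CARD('p)"
    and xs_stat: "xs \<in> stat_set F J"
    and A1: "\<gamma> > 0" "\<And>x v. x \<in> cball xs \<delta> \<Longrightarrow>
               (norm (J x *v v))\<^sup>2 + (norm (L *v v))\<^sup>2 \<ge> \<gamma> * (norm v)\<^sup>2"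
    and A2: "0 < \<delta>" "\<delta> < 1" "L0 > 0"
            "\<And>x y. x \<in> cball xs \<delta> \<Longrightarrow> y \<in> cball xs \<delta> \<Longrightarrow>
               spec_norm (J x - J y) \<le> L0 * norm (x - y)"
    and A3: "\<omega> > 0" "\<And>x. x \<in> cball xs \<delta> \<Longrightarrow>
               \<omega> * infdist x (stat_set F J) \<le> norm (transpose (J x) *v F x)"
    and A4: "0 < r" "r \<le> 1" "C \<ge> 0"
            "\<And>x z. x \<in> cball xs \<delta> \<Longrightarrow> z \<in> stat_set F J \<inter> cball xs \<delta> \<Longrightarrow>
               norm (transpose (J x - J z) *v F z) \<le> C * norm (x - z) powr (1 + r)"
  shows "\<exists>\<epsilon>>0. \<forall>x :: nat \<Rightarrow> real^'n.
           x 0 \<in> cball xs \<epsilon> \<longrightarrow>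
           (\<forall>k. if transpose (J (x k)) *v F (x k) \<noteq> 0
                 then (\<exists>d. (transpose (J (x k)) ** J (x k)
                             + (norm (transpose (J (x k)) *v F (x k)) powr r) *\<^sub>R (transpose L ** L)) *v d
                           = - (transpose (J (x k)) *v F (x k))
                         \<and> x (Suc k) = x k + d)
                 else x (Suc k) = x k) \<longrightarrow>
           ((\<lambda>k. infdist (x k) (stat_set F J)) \<longlonglongrightarrow> 0) \<and>
           (\<forall>e>0. eventually (\<lambda>k. infdist (x (Suc k)) (stat_set F J)
                                    \<le> e * infdist (x k) (stat_set F J)) sequentially) \<and>
           (\<exists>xb \<in> stat_set F J \<inter> cball xs (\<delta> / 2). x \<longlonglongrightarrow> xb)"
proof -
  obtain J' where J': "\<forall>x. (J has_derivative blinfun_apply (J' x)) (at x)" using F_C2 by blast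
  have Jc: "continuous_on UNIV J"
    by (rule continuous_at_imp_continuous_on) (use J' has_derivative_continuous in blast)
  have Fc: "continuous_on UNIV F"
    by (rule continuous_at_imp_continuous_on) (use F_deriv has_derivative_continuous in blast)
  interpret lmss F J L xs \<gamma> \<delta> L0 \<omega> r C
  proof (unfold_locales)
    show "closed (stat_set F J)" by (rule stat_closed[OF Fc Jc])
  qed (use F_deriv xs_stat A1 A2 A3 A4 in auto)
  show ?thesis by (rule main)
qed

end
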